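(* Let $\mu$ be a Borel probability measure on $\mathbb{R}$ with $m_1(\mu)=0$, $m_2(\mu)=1$ and $m_4(\mu)<\infty$. Then $$L(\mu,\mathbf{b})\le \frac72\sqrt[3]{m_4(\mu)-1}.$$
   Context: $m_k(\mu)=\int x^k\,d\mu(x)$. $\mathbf{b}=\frac12\delta_{-1}+\frac12\delta_1$. The Lévy distance between probability measures with distribution functions $F,G$ is $L=\inf\{\epsilon>0: F(x-\epsilon)-\epsilon\le G(x)\le F(x+\epsilon)+\epsilon\ \forall x\in\mathbb{R}\}$. *)

theory Defs
  imports "HOL-Probability.Probability"
begin

definition cdf_of :: "real measure \<Rightarrow> real \<Rightarrow> real" where
  "cdf_of M x = measure M {..x}"

definition levy_dist :: "real measure \<Rightarrow> real measure \<Rightarrow> real" where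
  "levy_dist M N = Inf {\<epsilon>. \<epsilon> > 0 \<and> (\<forall>x. cdf_of M (x - \<epsilon>) - \<epsilon> \<le> cdf_of N x
                                   \<and> cdf_of N x \<le> cdf_of M (x + \<epsilon>) + \<epsilon>)}"

definition bern_sym :: "real measure" where
  "bern_sym = measure_pmf (pmf_of_set {-1, 1})"

definition moment :: "real measure \<Rightarrow> nat \<Rightarrow> real" where
  "moment M k = (\<integral>x. x ^ k \<partial>M)"

end

theory Submission
  imports Defs
begin

lemma bern_cdf:
  "cdf_of bern_sym x = (if x < -1 then 0 else if x < 1 then 1/2 else 1)"
proof -
  have "cdf_of bern_sym x = card ({-1,1::real} \<inter> {..x}) / card {-1,1::real}"
    unfolding cdf_of_def bern_sym_def by (rule measure_pmf_of_set) auto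
  moreover have "{-1,1::real} \<inter> {..x} = (if x < -1 then {} else if x < 1 then {-1} else {-1,1})"
    by auto
  ultimately show ?thesis by auto
qed

lemma ptC:
  fixes e x :: real
  assumes e: "0 < e" "e \<le> 1"
  shows "indicator {..1-e} x \<le> (1-x)/2 + e/4 + (1/(4*e) + 1/e^2)*(x^2-1)^2"
proof -
  define Q where "Q = (x^2-1)^2"
  define A where "A = Q/(4*e)"
  define B where "B = Q/e^2"
  define I where "I = (indicator {..1-e} x :: real)"
  have KQ: "(1/(4*e) + 1/e^2)*Q = A + B" unfolding A_def B_def by (simp add: algebra_simps)
  have h1: "\<bar>x^2-1\<bar>/2 \<le> e/4 + A"
  proof -
    have "0 \<le> (\<bar>x^2-1\<bar> - e)^2" by simp
    hence "2*e*\<bar>x^2-1\<bar> \<le> e^2 + (x^2-1)^2" by (simp add: power2_eq_square algebra_simps)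
    thus ?thesis using e unfolding A_def Q_def by (simp add: field_simps power2_eq_square)
  qed
  have h2: "0 \<le> B" unfolding B_def Q_def by simp
  have hA: "0 \<le> A" unfolding A_def Q_def using e by simp
  have "I \<le> (1-x)/2 + e/4 + A + B"
  proof (cases "x \<le> 0")
    case True
    have "\<bar>x+1\<bar> \<le> \<bar>x^2-1\<bar>"
    proof -
      have "x^2-1 = (x+1)*(x-1)" by (simp add: power2_eq_square algebra_simps)
      hence "\<bar>x^2-1\<bar> = \<bar>x+1\<bar>*\<bar>x-1\<bar>" by (simp add: abs_mult)
      moreover have "\<bar>x-1\<bar> \<ge> 1" using True by simp
      ultimately show ?thesis using mult_left_mono[of 1 "\<bar>x-1\<bar>" "\<bar>x+1\<bar>"] by simp
    qed
    hence "x + 1 \<le> \<bar>x^2-1\<bar>" using abs_ge_self[of "x+1"] by linarith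
    moreover have "I = 1" using True e unfolding I_def by (simp add: indicator_def)
    ultimately show ?thesis using h1 h2 by argo
  next
    case False
    show ?thesis
    proof (cases "x \<le> 1 - e")
      case True
      have "e \<le> 1 - x^2" using True False e
        by (smt (verit) mult_left_le_one_le power2_eq_square)
      hence "e^2 \<le> (1-x^2)^2" using e power_mono[of e "1-x^2" 2] by simp
      hence "e^2 \<le> Q" unfolding Q_def by (simp add: power2_commute)
      hence "1 \<le> B" using e unfolding B_def by simp
      moreover have "I = 1" using True e unfolding I_def by (simp add: indicator_def)
      ultimately show ?thesis using True e hA by argo
    next
      case F2: False
      have "(x-1)/2 \<le> \<bar>x^2-1\<bar>/2"
      proof (cases "x \<le> 1")
        case True thus ?thesis using abs_ge_zero[of "x^2-1"] by argo
      next
        case False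
        hence "x - 1 \<le> x^2 - 1" by (simp add: power2_eq_square)
        thus ?thesis using abs_ge_self[of "x^2-1"] by argo
      qed
      moreover have "I = 0" using F2 unfolding I_def by (simp add: indicator_def)
      ultimately show ?thesis using h1 h2 by argo
    qed
  qed
  thus ?thesis unfolding I_def Q_def[symmetric] KQ by argo
qed


lemma ptT:
  fixes e x :: real
  assumes e: "0 < e" and x: "1 + e \<le> \<bar>x\<bar>"
  shows "1 \<le> (1/(4*e) + 1/e^2)*(x^2-1)^2"
proof -
  have "(1+e)^2 \<le> \<bar>x\<bar>^2" using x e power_mono[of "1+e" "\<bar>x\<bar>" 2] by simp
  hence "(1+e)^2 \<le> x^2" by simp
  moreover have "(1+e)^2 = 1 + 2*e + e^2" by (simp add: power2_eq_square algebra_simps)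
  ultimately have "2*e \<le> x^2 - 1" using zero_le_power2[of e] by argo
  hence "(2*e)^2 \<le> (x^2-1)^2" using e power_mono[of "2*e" "x^2-1" 2] by simp
  hence "4 \<le> (x^2-1)^2/e^2" using e by (simp add: field_simps power2_eq_square)
  moreover have "(1/(4*e) + 1/e^2)*(x^2-1)^2 = (x^2-1)^2/(4*e) + (x^2-1)^2/e^2"
    by (simp add: algebra_simps)
  moreover have "0 \<le> (x^2-1)^2/(4*e)" using e by simp
  ultimately show ?thesis by argo
qed

lemma ptA:
  fixes e x :: real
  assumes e: "0 < e"
  shows "indicator {..-1-e} x \<le> (1/(4*e) + 1/e^2)*(x^2-1)^2"
proof (cases "x \<le> -1-e")
  case True
  hence "1 + e \<le> \<bar>x\<bar>" by argo
  thus ?thesis using ptT[OF e] True by (simp add: indicator_def)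
next
  case False
  thus ?thesis using e by (simp add: indicator_def)
qed

lemma ptB:
  fixes e x :: real
  assumes e: "0 < e"
  shows "1 - (1/(4*e) + 1/e^2)*(x^2-1)^2 \<le> indicator {..1+e} x"
proof (cases "x \<le> 1+e")
  case False
  hence "1 + e \<le> \<bar>x\<bar>" by argo
  thus ?thesis using ptT[OF e] False by (simp add: indicator_def)
next
  case True
  thus ?thesis using e by (simp add: indicator_def)
qed

lemma ptD:
  fixes e x :: real
  assumes e: "0 < e" "e \<le> 1"
  shows "(1-x)/2 - e/4 - (1/(4*e) + 1/e^2)*(x^2-1)^2 \<le> indicator {..-1+e} x"
proof -
  have c: "indicator {..1-e} (-x) \<le> (1+x)/2 + e/4 + (1/(4*e) + 1/e^2)*(x^2-1)^2"
    using ptC[OF e, of "-x"] by simp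
  have "1 \<le> indicator {..-1+e} x + (indicator {..1-e} (-x) :: real)"
    by (auto simp: indicator_def)
  thus ?thesis using c by argo
qed

lemma levy_le_one_in:
  assumes "prob_space M" "1 \<le> e"
  shows "\<forall>x. cdf_of M (x - e) - e \<le> cdf_of bern_sym x \<and> cdf_of bern_sym x \<le> cdf_of M (x + e) + e"
proof
  fix x
  interpret P: prob_space M by fact
  have "cdf_of M (x - e) \<le> 1" "0 \<le> cdf_of M (x + e)" unfolding cdf_of_def
    by (auto simp: P.prob_le_1)
  moreover have "0 \<le> cdf_of bern_sym x" "cdf_of bern_sym x \<le> 1" by (auto simp: bern_cdf)
  ultimately show "cdf_of M (x - e) - e \<le> cdf_of bern_sym x \<and> cdf_of bern_sym x \<le> cdf_of M (x + e) + e"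
    using assms(2) by argo
qed


lemma bnd1: "\<bar>x::real\<bar> \<le> 1 + x^4"
proof (cases "\<bar>x\<bar> \<le> 1")
  case True
  have "0 \<le> x^4" by (simp add: zero_le_even_power)
  thus ?thesis using True by argo
next
  case False
  hence "\<bar>x\<bar>^1 \<le> \<bar>x\<bar>^4" by (intro power_increasing) auto
  moreover have "\<bar>x\<bar>^4 = x^4" by (simp add: power_even_abs_numeral)
  ultimately show ?thesis by simp
qed

lemma bnd2: "\<bar>(x::real)^2\<bar> \<le> 1 + x^4"
proof -
  have "0 \<le> (x^2 - 1)^2" by simp
  moreover have "(x^2 - 1)^2 = x^4 - 2*x^2 + 1" by algebra
  moreover have "0 \<le> x^4" by (simp add: zero_le_even_power)
  ultimately have "x^2 \<le> 1 + x^4" by argo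
  thus ?thesis by simp
qed

lemma bnd2b: "(x::real)^2 \<le> 1 + x^4"
  using bnd2[of x] by simp

lemma sqid: "((x::real)^2 - 1)^2 = 1 - 2*x^2 + x^4" by algebra

theorem mainTheorem4:
  fixes M :: "real measure"
  assumes "prob_space M"
    and "sets M = sets borel"
    and "integrable M (\<lambda>x. x ^ 4)"
    and "moment M 1 = 0"
    and "moment M 2 = 1"
  shows "levy_dist M bern_sym \<le> 7 / 2 * root 3 (moment M 4 - 1)"
proof -
  interpret P: prob_space M by fact
  have sp: "space M = UNIV" using sets_eq_imp_space_eq[OF assms(2)] by simp
  have meas: "\<And>f::real\<Rightarrow>real. f \<in> borel_measurable borel \<Longrightarrow> f \<in> borel_measurable M"
    by (metis measurable_cong_sets[OF assms(2) refl])
  have setsI: "\<And>t::real. {..t} \<in> sets M" using assms(2) by simp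
  have i4: "integrable M (\<lambda>x. x^4)" by fact
  have i0: "integrable M (\<lambda>x. 1 + x^4)" using i4 by simp
  have i1: "integrable M (\<lambda>x. x)"
    by (rule Bochner_Integration.integrable_bound[OF i0]) (auto intro!: meas AE_I2 simp: bnd1 order_trans[OF bnd1] abs_of_nonneg zero_le_even_power)
  have i2: "integrable M (\<lambda>x. x^2)"
    by (rule Bochner_Integration.integrable_bound[OF i0]) (auto intro!: meas AE_I2 simp: bnd2 bnd2b abs_of_nonneg zero_le_even_power)
  have m1: "(\<integral>x. x \<partial>M) = 0" using assms(4) unfolding moment_def by simp
  have m2: "(\<integral>x. x^2 \<partial>M) = 1" using assms(5) unfolding moment_def by simp
  define m4 where "m4 = moment M 4"
  have m4': "(\<integral>x. x^4 \<partial>M) = m4" unfolding m4_def moment_def by simp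
  have intp: "\<And>a b c d. integrable M (\<lambda>x. a + b*x + c*x^2 + d*x^4)"
    using i1 i2 i4 by simp
  have ipoly: "\<And>a b c d. (\<integral>x. a + b*x + c*x^2 + d*x^4 \<partial>M) = a + c + d*m4"
    using i1 i2 i4 m1 m2 m4' by (simp add: P.prob_space)
  define \<delta> where "\<delta> = m4 - 1"
  have dnn: "0 \<le> \<delta>"
  proof -
    have "0 \<le> (\<integral>x. (x^2-1)^2 \<partial>M)" by simp
    also have "(\<integral>x. (x^2-1)^2 \<partial>M) = (\<integral>x. 1 + 0*x + (-2)*x^2 + 1*x^4 \<partial>M)"
      by (simp add: sqid)
    also have "\<dots> = \<delta>" unfolding ipoly \<delta>_def by simp
    finally show ?thesis .
  qed
  have cdf_int: "\<And>t. cdf_of M t = (\<integral>x. indicator {..t} x \<partial>M)"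
    unfolding cdf_of_def by (simp add: sp)
  have iind: "\<And>t. integrable M (indicator {..t} :: real \<Rightarrow> real)"
    using setsI by (intro integrable_real_indicator) (auto simp: less_top[symmetric])
  have up: "\<And>t a b c d. (\<And>x. indicator {..t} x \<le> a + b*x + c*x^2 + d*x^4) \<Longrightarrow>
      cdf_of M t \<le> a + c + d*m4"
  proof -
    fix t a b c d :: real assume h: "\<And>x. indicator {..t} x \<le> a + b*x + c*x^2 + d*x^4"
    have "cdf_of M t \<le> (\<integral>x. a + b*x + c*x^2 + d*x^4 \<partial>M)"
      unfolding cdf_int by (rule integral_mono[OF iind intp]) (rule h)
    thus "cdf_of M t \<le> a + c + d*m4" by (simp only: ipoly)
  qed
  have lo: "\<And>t a b c d. (\<And>x. a + b*x + c*x^2 + d*x^4 \<le> indicator {..t} x) \<Longrightarrow>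
      a + c + d*m4 \<le> cdf_of M t"
  proof -
    fix t a b c d :: real assume h: "\<And>x. a + b*x + c*x^2 + d*x^4 \<le> indicator {..t} x"
    have "(\<integral>x. a + b*x + c*x^2 + d*x^4 \<partial>M) \<le> cdf_of M t"
      unfolding cdf_int by (rule integral_mono[OF intp iind]) (rule h)
    thus "a + c + d*m4 \<le> cdf_of M t" by (simp only: ipoly)
  qed
  have cmono: "\<And>a b. a \<le> b \<Longrightarrow> cdf_of M a \<le> cdf_of M b"
    unfolding cdf_of_def by (rule P.finite_measure_mono) (auto simp: setsI)
  have c01: "\<And>a. 0 \<le> cdf_of M a \<and> cdf_of M a \<le> 1"
    unfolding cdf_of_def by (auto simp: P.prob_le_1)
  define c where "c = 7/2 * root 3 \<delta>"
  have c0: "0 \<le> c" using dnn by (simp add: c_def real_root_ge_zero)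
  define S where "S = {\<epsilon>. \<epsilon> > 0 \<and> (\<forall>x. cdf_of M (x - \<epsilon>) - \<epsilon> \<le> cdf_of bern_sym x
                                   \<and> cdf_of bern_sym x \<le> cdf_of M (x + \<epsilon>) + \<epsilon>)}"
  have L: "levy_dist M bern_sym = Inf S" unfolding levy_dist_def S_def ..
  have mem: "\<And>e. c < e \<Longrightarrow> e \<in> S"
  proof -
    fix e assume ce: "c < e"
    hence e0: "0 < e" using c0 by argo
    show "e \<in> S"
    proof (cases "1 \<le> e")
      case True thus ?thesis unfolding S_def using levy_le_one_in[OF assms(1) True] e0 by simp
    next
      case False
      hence e1: "e \<le> 1" by argo
      define r where "r = root 3 \<delta>"
      have r0: "0 \<le> r" and r3: "r^3 = \<delta>" using dnn by (auto simp: r_def real_root_ge_zero)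
      have "(7/2*r)^3 < e^3" using ce r0 unfolding c_def r_def[symmetric]
        by (intro power_strict_mono) auto
      moreover have "(7/2*r)^3 = 343/8 * r^3" by algebra
      moreover have "0 \<le> e^3" using e0 by simp
      ultimately have dsm: "\<delta> \<le> 3/5 * e^3" using r3 by argo
      define K where "K = 1/(4*e) + 1/e^2"
      have Kd: "K*\<delta> \<le> 3/4*e"
      proof -
        have "4*e^2 \<le> 4*e" using e0 e1 by (simp add: power2_eq_square mult_left_le_one_le)
        hence "1/(4*e) \<le> 1/(4*e^2)" using e0 by (intro divide_left_mono) auto
        moreover have "1/(4*e^2) + 1/e^2 = 5/(4*e^2)" using e0 by (simp add: field_simps)
        ultimately have "K \<le> 5/(4*e^2)" unfolding K_def by argo
        hence "K*\<delta> \<le> 5/(4*e^2)*\<delta>" using dnn by (rule mult_right_mono)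
        also have "\<dots> \<le> 5/(4*e^2)*(3/5 * e^3)" using dsm e0 by (intro mult_left_mono) auto
        also have "\<dots> = 3/4*e" using e0 by (simp add: field_simps power2_eq_square power3_eq_cube)
        finally show ?thesis .
      qed
      have cA: "cdf_of M (-1-e) \<le> K*\<delta>"
      proof -
        have "\<And>x. indicator {..-1-e} x \<le> K + 0*x + (-2*K)*x^2 + K*x^4"
        proof -
          fix x :: real
          have h: "indicator {..-1-e} x \<le> K*(1 - 2*x^2 + x^4)"
            using ptA[OF e0, of x] unfolding K_def[symmetric] sqid .
          have eq: "K*(1 - 2*x^2 + x^4) = K + 0*x + (-2*K)*x^2 + K*x^4" by (simp add: algebra_simps)
          show "indicator {..-1-e} x \<le> K + 0*x + (-2*K)*x^2 + K*x^4" using h eq by argo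
        qed
        from up[OF this] show ?thesis unfolding \<delta>_def by (simp add: algebra_simps)
      qed
      have cB: "1 - K*\<delta> \<le> cdf_of M (1+e)"
      proof -
        have "\<And>x. (1-K) + 0*x + (2*K)*x^2 + (-K)*x^4 \<le> indicator {..1+e} x"
        proof -
          fix x :: real
          have h: "1 - K*(1 - 2*x^2 + x^4) \<le> indicator {..1+e} x"
            using ptB[OF e0, of x] unfolding K_def[symmetric] sqid .
          have eq: "1 - K*(1 - 2*x^2 + x^4) = (1-K) + 0*x + (2*K)*x^2 + (-K)*x^4" by (simp add: algebra_simps)
          show "(1-K) + 0*x + (2*K)*x^2 + (-K)*x^4 \<le> indicator {..1+e} x" using h eq by argo
        qed
        from lo[OF this] show ?thesis unfolding \<delta>_def by (simp add: algebra_simps)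
      qed
      have cC: "cdf_of M (1-e) \<le> 1/2 + e/4 + K*\<delta>"
      proof -
        have "\<And>x. indicator {..1-e} x \<le> (1/2 + e/4 + K) + (-1/2)*x + (-2*K)*x^2 + K*x^4"
        proof -
          fix x :: real
          have h: "indicator {..1-e} x \<le> (1-x)/2 + e/4 + K*(1 - 2*x^2 + x^4)"
            using ptC[OF e0 e1, of x] unfolding K_def[symmetric] sqid .
          have eq: "(1-x)/2 + e/4 + K*(1 - 2*x^2 + x^4) = (1/2 + e/4 + K) + (-1/2)*x + (-2*K)*x^2 + K*x^4"
            by (simp add: field_simps)
          show "indicator {..1-e} x \<le> (1/2 + e/4 + K) + (-1/2)*x + (-2*K)*x^2 + K*x^4" using h eq by argo
        qed
        from up[OF this] show ?thesis unfolding \<delta>_def by (simp add: algebra_simps)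
      qed
      have cD: "1/2 - e/4 - K*\<delta> \<le> cdf_of M (-1+e)"
      proof -
        have "\<And>x. (1/2 - e/4 - K) + (-1/2)*x + (2*K)*x^2 + (-K)*x^4 \<le> indicator {..-1+e} x"
        proof -
          fix x :: real
          have h: "(1-x)/2 - e/4 - K*(1 - 2*x^2 + x^4) \<le> indicator {..-1+e} x"
            using ptD[OF e0 e1, of x] unfolding K_def[symmetric] sqid .
          have eq: "(1-x)/2 - e/4 - K*(1 - 2*x^2 + x^4) = (1/2 - e/4 - K) + (-1/2)*x + (2*K)*x^2 + (-K)*x^4"
            by (simp add: field_simps)
          show "(1/2 - e/4 - K) + (-1/2)*x + (2*K)*x^2 + (-K)*x^4 \<le> indicator {..-1+e} x" using h eq by argo
        qed
        from lo[OF this] show ?thesis unfolding \<delta>_def by (simp add: algebra_simps)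
      qed
      have "\<forall>x. cdf_of M (x - e) - e \<le> cdf_of bern_sym x \<and> cdf_of bern_sym x \<le> cdf_of M (x + e) + e"
      proof
        fix x :: real
        show "cdf_of M (x - e) - e \<le> cdf_of bern_sym x \<and> cdf_of bern_sym x \<le> cdf_of M (x + e) + e"
        proof (cases "x < -1")
          case True
          hence G: "cdf_of bern_sym x = 0" by (simp add: bern_cdf)
          have "cdf_of M (x - e) \<le> cdf_of M (-1-e)" using True by (intro cmono) argo
          thus ?thesis using G cA Kd c01[of "x+e"] e0 by argo
        next
          case F1: False
          show ?thesis
          proof (cases "x < 1")
            case True
            hence G: "cdf_of bern_sym x = 1/2" using F1 by (simp add: bern_cdf)
            have "cdf_of M (x - e) \<le> cdf_of M (1-e)" using True by (intro cmono) argo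
            moreover have "cdf_of M (-1+e) \<le> cdf_of M (x+e)" using F1 by (intro cmono) argo
            ultimately show ?thesis using G cC cD Kd e0 by argo
          next
            case False
            hence G: "cdf_of bern_sym x = 1" using F1 by (simp add: bern_cdf)
            have "cdf_of M (1+e) \<le> cdf_of M (x+e)" using False by (intro cmono) argo
            thus ?thesis using G cB Kd c01[of "x-e"] e0 by argo
          qed
        qed
      qed
      thus ?thesis unfolding S_def using e0 by simp
    qed
  qed
  have bdd: "bdd_below S" unfolding S_def by (rule bdd_belowI[of _ 0]) auto
  have cc: "7 / 2 * root 3 (moment M 4 - 1) = c" by (simp add: c_def \<delta>_def m4_def)
  show ?thesis unfolding L cc
  proof (rule ccontr)
    assume "\<not> Inf S \<le> c"
    hence lt: "c < Inf S" by argo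
    define e where "e = (c + Inf S)/2"
    have "c < e" using lt unfolding e_def by argo
    hence "e \<in> S" by (rule mem)
    hence "Inf S \<le> e" using bdd by (rule cInf_lower)
    thus False using lt unfolding e_def by argo
  qed
qed

end
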